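(* Consider any JPLT-I protocol. For every realization $\mathrm{Q}$ of the query $Q$ occurring with positive probability and every $\tilde W\in\mathbb{W}$, there exists $\tilde V\in\mathbb{V}_I$ such that $H\big(Z^{[\tilde W,\tilde V]}\mid A,\,Q=\mathrm{Q}\big)=0$, i.e., conditioned on $Q=\mathrm{Q}$, the matrix $Z^{[\tilde W,\tilde V]}=\tilde V X_{\tilde W}$ is a deterministic function of the answer $A$.
   Context: Setup. Let $q$ be a prime power, $N\ge 1$ an integer, $B=N\log_2 q$, and $1\le L\le D\le K$ integers. Let $\mathbb{W}$ be the set of all $D$-element subsets of $[K]=\{1,\dots,K\}$. Let $\mathbb{V}_I$ be the set of $L\times D$ matrices over $\mathbb{F}_q$ that are MDS (every $L\times L$ submatrix is invertible), and $\mathbb{V}_{II}$ the set of $L\times D$ matrices over $\mathbb{F}_q$ of rank $L$. A server stores messages $X_1,\dots,X_K\in\mathbb{F}_q^N$ (row vectors), which are independent and uniformly distributed; $X$ denotes the $K\times N$ matrix with rows $X_1,\dots,X_K$, and for $S\subseteq[K]$, $X_S$ is the submatrix of rows indexed by $S$ (in increasing order). For $W\in\mathbb{W}$ and an $L\times D$ matrix $V$, the demand is $Z^{[W,V]}=VX_W=UX$, where the global coefficient matrix $U$ is the $L\times K$ matrix whose columns indexed by $W$ (in increasing order) are the columns of $V$ and whose other columns are zero. The demand support $W$ is uniform on $\mathbb{W}$; the coefficient matrix $V$ is uniform on $\mathbb{V}_I$ (Model I) or on $\mathbb{V}_{II}$ (Model II); $W,V,X$ are mutually independent. The server knows $K,D,L$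 and these distributions but not the realizations of $W,V$. Protocol. The user draws private randomness $R$ independent of $(W,V,X)$ and sends a query $Q=Q^{[W,V]}$ that is a function of $(W,V,R)$; the server returns an answer $A=A^{[W,V]}$ that is a deterministic function of $(Q,X)$. Recoverability: $H(Z^{[W,V]}\mid A,Q,W,V)=0$. Joint privacy: for every realization $\mathrm{Q}$ of the query with positive probability and every $\tilde W\in\mathbb{W}$, $\Pr(W=\tilde W\mid Q=\mathrm{Q})=1/\binom{K}{D}$. A JPLT-I (resp. JPLT-II) protocol is a protocol satisfying recoverability and joint privacy under Model I (resp. Model II). The rate of a protocol is $H(Z^{[W,V]})/H(A)=LB/H(A)$. *)

theory Defs
  imports "Jordan_Normal_Form.DL_Submatrix" "HOL-Probability.Probability_Mass_Function"
    "HOL-Analysis.Infinite_Sum"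
begin

definition cond_entropy :: "('z \<times> 'y) pmf \<Rightarrow> real" where
  "cond_entropy P = (\<Sum>\<^sub>\<infinity>zy\<in>set_pmf P. pmf P zy * log 2 (pmf (map_pmf snd P) (snd zy) / pmf P zy))"

definition supports :: "nat \<Rightarrow> nat \<Rightarrow> nat set set" where
  "supports K D = {S. S \<subseteq> {0..<K} \<and> card S = D}"

definition MDS_mats :: "nat \<Rightarrow> nat \<Rightarrow> ('f::field) mat set" where
  "MDS_mats L D = {V \<in> carrier_mat L D.
       \<forall>C. C \<subseteq> {0..<D} \<longrightarrow> card C = L \<longrightarrow> invertible_mat (submatrix V {0..<L} C)}"

(* Demand Z^[W,V] = V X_W, with X_W the rows of X indexed by W in increasing order. *)
definition demand :: "nat set \<Rightarrow> ('f::field) mat \<Rightarrow> 'f mat \<Rightarrow> 'f mat" where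
  "demand W V X = V * submatrix X W {0..<dim_col X}"

definition jplt1_joint :: "nat \<Rightarrow> nat \<Rightarrow> nat \<Rightarrow> nat \<Rightarrow> 'r pmf
      \<Rightarrow> (nat set \<times> ('f::{finite,field}) mat \<times> 'r \<times> 'f mat) pmf" where
  "jplt1_joint K N D L rho =
     do { w \<leftarrow> pmf_of_set (supports K D);
          v \<leftarrow> pmf_of_set (MDS_mats L D);
          r \<leftarrow> rho;
          x \<leftarrow> pmf_of_set (carrier_mat K N);
          return_pmf (w, v, r, x) }"

definition JPLT_I_protocol :: "nat \<Rightarrow> nat \<Rightarrow> nat \<Rightarrow> nat \<Rightarrow> 'r pmf
      \<Rightarrow> (nat set \<Rightarrow> ('f::{finite,field}) mat \<Rightarrow> 'r \<Rightarrow> 'q) \<Rightarrow> ('q \<Rightarrow> 'f mat \<Rightarrow> 'a) \<Rightarrow> bool" where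
  "JPLT_I_protocol K N D L rho query answer \<longleftrightarrow>
     (let P = jplt1_joint K N D L rho in
      \<comment> \<open>recoverability: H(Z^[W,V] | A, Q, W, V) = 0\<close>
      cond_entropy (map_pmf (\<lambda>(w,v,r,x). (demand w v x, (answer (query w v r) x, query w v r, w, v))) P) = 0
      \<and>
      \<comment> \<open>joint privacy\<close>
      (\<forall>qq Wt. measure_pmf.prob P {(w,v,r,x). query w v r = qq} > 0 \<longrightarrow> Wt \<in> supports K D \<longrightarrow>
          measure_pmf.prob P {(w,v,r,x). w = Wt \<and> query w v r = qq}
            / measure_pmf.prob P {(w,v,r,x). query w v r = qq} = 1 / real (K choose D)))"

end

theory Submission
  imports Defs
begin

lemma cond_entropy_det:
  fixes P :: "('z \<times> 'y) pmf"
  assumes det: "\<And>zy. zy \<in> set_pmf P \<Longrightarrow> fst zy = F (snd zy)"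
  shows "cond_entropy P = 0"
proof -
  have eq: "pmf (map_pmf snd P) (snd zy) = pmf P zy" if zy: "zy \<in> set_pmf P" for zy
  proof -
    have "pmf (map_pmf snd P) (snd zy) = measure P (snd -` {snd zy})" by (simp add: pmf_map)
    also have "\<dots> = measure P (snd -` {snd zy} \<inter> set_pmf P)" by (simp add: measure_Int_set_pmf)
    also have "snd -` {snd zy} \<inter> set_pmf P = {zy}"
    proof -
      have "\<And>x. x \<in> set_pmf P \<Longrightarrow> snd x = snd zy \<Longrightarrow> x = zy"
        using det zy by (metis prod.expand)
      then show ?thesis using zy by blast
    qed
    also have "measure P {zy} = pmf P zy" by (simp add: measure_pmf_single)
    finally show ?thesis .
  qed
  show ?thesis unfolding cond_entropy_def
    by (rule infsum_0) (simp add: eq set_pmf_iff)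
qed

lemma cond_entropy_zero_det:
  fixes P :: "('z \<times> 'y) pmf"
  assumes fin: "finite (fst ` set_pmf P)" and H: "cond_entropy P = 0"
   and a: "a \<in> set_pmf P" and b: "b \<in> set_pmf P" and ab: "snd a = snd b"
  shows "fst a = fst b"
proof (rule ccontr)
  assume ne: "fst a \<noteq> fst b"
  define Q where "Q = map_pmf snd P"
  define f where "f zy = pmf P zy * log 2 (pmf Q (snd zy) / pmf P zy)" for zy
  define Zs where "Zs = fst ` set_pmf P"
  have Qmeas: "pmf Q y = measure P (snd -` {y})" for y unfolding Q_def by (simp add: pmf_map)
  have Qge: "pmf P zy \<le> pmf Q (snd zy)" for zy
  proof -
    have "pmf P zy = measure P {zy}" by (simp add: measure_pmf_single)
    also have "\<dots> \<le> measure P (snd -` {snd zy})"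
      by (rule measure_pmf.finite_measure_mono) auto
    finally show ?thesis by (simp add: Qmeas)
  qed
  have ppos: "zy \<in> set_pmf P \<Longrightarrow> 0 < pmf P zy" for zy
    by (simp add: pmf_positive)
  have f_nonneg: "0 \<le> f zy" if "zy \<in> set_pmf P" for zy
  proof -
    have p: "0 < pmf P zy" using ppos that .
    have "1 \<le> pmf Q (snd zy) / pmf P zy" using Qge[of zy] p by simp
    then have "0 \<le> log 2 (pmf Q (snd zy) / pmf P zy)" by simp
    then show ?thesis unfolding f_def using p by simp
  qed
  have f_le: "f zy \<le> pmf Q (snd zy) / ln 2" if "zy \<in> set_pmf P" for zy
  proof -
    have p: "0 < pmf P zy" using ppos that .
    have q: "0 < pmf Q (snd zy)" using Qge[of zy] p by simp
    have "ln (pmf Q (snd zy) / pmf P zy) \<le> pmf Q (snd zy) / pmf P zy - 1"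
      using p q by (intro ln_le_minus_one) simp
    then have "pmf P zy * ln (pmf Q (snd zy) / pmf P zy) \<le> pmf P zy * (pmf Q (snd zy) / pmf P zy - 1)"
      using p by (intro mult_left_mono) auto
    also have "\<dots> \<le> pmf Q (snd zy)" using p by (simp add: field_simps)
    finally have "pmf P zy * ln (pmf Q (snd zy) / pmf P zy) \<le> pmf Q (snd zy)" .
    then show ?thesis unfolding f_def log_def
      by (simp add: divide_right_mono)
  qed
  have summ: "f summable_on set_pmf P"
  proof (rule nonneg_bdd_above_summable_on)
    show "\<And>x. x \<in> set_pmf P \<Longrightarrow> 0 \<le> f x" using f_nonneg by blast
    show "bdd_above (sum f ` {F. F \<subseteq> set_pmf P \<and> finite F})"
    proof (rule bdd_aboveI2)
      fix F assume F: "F \<in> {F. F \<subseteq> set_pmf P \<and> finite F}"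
      then have Fs: "F \<subseteq> set_pmf P" and Ff: "finite F" by auto
      have "sum f F \<le> (\<Sum>zy\<in>F. pmf Q (snd zy) / ln 2)"
        using f_le Fs by (intro sum_mono) auto
      also have "\<dots> \<le> (\<Sum>zy\<in>Zs \<times> snd ` F. pmf Q (snd zy) / ln 2)"
        using Fs Ff fin unfolding Zs_def
        by (intro sum_mono2) (auto intro!: divide_nonneg_pos rev_image_eqI)
      also have "\<dots> = (\<Sum>z\<in>Zs. \<Sum>y\<in>snd ` F. pmf Q y / ln 2)"
        unfolding sum.cartesian_product by (simp add: split_def)
      also have "\<dots> \<le> (\<Sum>z\<in>Zs. 1 / ln 2)"
      proof (rule sum_mono)
        fix z
        have "(\<Sum>y\<in>snd ` F. pmf Q y / ln 2) = (\<Sum>y\<in>snd ` F. pmf Q y) / ln 2"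
          by (simp add: sum_divide_distrib)
        also have "(\<Sum>y\<in>snd ` F. pmf Q y) = measure Q (snd ` F)"
          using Ff by (simp add: measure_measure_pmf_finite)
        also have "measure Q (snd ` F) \<le> 1" by simp
        finally show "(\<Sum>y\<in>snd ` F. pmf Q y / ln 2) \<le> 1 / ln 2"
          using \<open>measure Q (snd ` F) \<le> 1\<close> by (simp add: divide_right_mono)
      qed
      finally show "sum f F \<le> (\<Sum>z\<in>Zs. 1 / ln 2)" .
    qed
  qed
  have inf0: "infsum f (set_pmf P) = 0" using H unfolding cond_entropy_def f_def Q_def .
  have "infsum f {a} \<le> infsum f (set_pmf P)"
    using a summ f_nonneg by (intro infsum_mono_neutral) auto
  then have "f a \<le> 0" using inf0 by simp
  then have fa: "f a = 0" using f_nonneg[OF a] by simp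
  have p: "0 < pmf P a" using ppos a .
  have q: "0 < pmf Q (snd a)" using Qge[of a] p by simp
  have "log 2 (pmf Q (snd a) / pmf P a) = 0" using fa p unfolding f_def by simp
  then have "pmf Q (snd a) / pmf P a = 1"
  proof -
    assume l0: "log 2 (pmf Q (snd a) / pmf P a) = 0"
    have r: "0 < pmf Q (snd a) / pmf P a" using p q by simp
    have "pmf Q (snd a) / pmf P a = 2 powr (log 2 (pmf Q (snd a) / pmf P a))"
      using r by simp
    also have "\<dots> = 1" using l0 by simp
    finally show ?thesis .
  qed
  then have qa: "pmf Q (snd a) = pmf P a" using p by (simp add: field_simps)
  have "a \<noteq> b" using ne by auto
  have "pmf P a + pmf P b = measure P {a, b}"
    using \<open>a \<noteq> b\<close> by (simp add: measure_measure_pmf_finite)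
  also have "\<dots> \<le> pmf Q (snd a)"
    unfolding Qmeas using ab by (intro measure_pmf.finite_measure_mono) auto
  finally show False using qa ppos[OF b] by simp
qed

lemma finite_carrier_mat: "finite (carrier_mat n m :: ('f::finite) mat set)"
proof -
  let ?I = "{0..<n} \<times> {0..<m}"
  have "carrier_mat n m \<subseteq> (\<lambda>f. Matrix.mat n m f) ` (PiE ?I (\<lambda>_. (UNIV::'f set)))"
  proof
    fix A :: "'f mat" assume A: "A \<in> carrier_mat n m"
    have "A = Matrix.mat n m (restrict (\<lambda>ij. A $$ ij) ?I)"
      using A by (intro eq_matI) auto
    moreover have "restrict (\<lambda>ij. A $$ ij) ?I \<in> PiE ?I (\<lambda>_. UNIV)" by auto
    ultimately show "A \<in> (\<lambda>f. Matrix.mat n m f) ` (PiE ?I (\<lambda>_. (UNIV::'f set)))" by blast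
  qed
  moreover have "finite (PiE ?I (\<lambda>_. (UNIV::'f set)))" by (intro finite_PiE) auto
  ultimately show ?thesis using finite_surj by blast
qed

theorem lemma1:
  fixes K N D L :: nat
    and rho :: "'r pmf"
    and query :: "nat set \<Rightarrow> ('f::{finite,field}) mat \<Rightarrow> 'r \<Rightarrow> 'q"
    and answer :: "'q \<Rightarrow> 'f mat \<Rightarrow> 'a"
  assumes "1 \<le> N" and "1 \<le> L" and "L \<le> D" and "D \<le> K"
    and "MDS_mats L D \<noteq> ({} :: 'f mat set)"
    and "JPLT_I_protocol K N D L rho query answer"
    and "measure_pmf.prob (jplt1_joint K N D L rho) {(w,v,r,x). query w v r = qq} > 0"
    and "Wt \<in> supports K D"
  shows "\<exists>Vt \<in> MDS_mats L D.
           cond_entropy (map_pmf (\<lambda>(w,v,r,x). (demand Wt Vt x, answer (query w v r) x))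
              (cond_pmf (jplt1_joint K N D L rho) {(w,v,r,x). query w v r = qq})) = 0"
proof -
  define P where "P = (jplt1_joint K N D L rho :: (nat set \<times> 'f mat \<times> 'r \<times> 'f mat) pmf)"
  define S where "S = supports K D"
  define M where "M = (MDS_mats L D :: 'f mat set)"
  define C where "C = (carrier_mat K N :: 'f mat set)"
  have finS: "finite S" unfolding S_def supports_def
    by (rule finite_subset[of _ "Pow {0..<K}"]) auto
  have finM: "finite M" unfolding M_def MDS_mats_def
    by (rule finite_subset[OF _ finite_carrier_mat[of L D]]) auto
  have finC: "finite C" unfolding C_def by (rule finite_carrier_mat)
  have neS: "S \<noteq> {}" using assms(8) unfolding S_def by auto
  have neM: "M \<noteq> {}" using assms(5) unfolding M_def by auto
  have neC: "C \<noteq> {}" unfolding C_def by (metis empty_iff zero_carrier_mat)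
  have setP: "set_pmf P = S \<times> M \<times> set_pmf rho \<times> C"
    unfolding P_def jplt1_joint_def S_def[symmetric] M_def[symmetric] C_def[symmetric]
    using finS finM finC neS neM neC by (auto simp: set_bind_pmf)
  have prot: "JPLT_I_protocol K N D L rho query answer" by (rule assms(6))
  have rec: "cond_entropy (map_pmf (\<lambda>(w,v,r,x). (demand w v x, (answer (query w v r) x, query w v r, w, v))) P) = 0"
   and priv: "measure_pmf.prob P {(w,v,r,x). w = Wt \<and> query w v r = qq}
            / measure_pmf.prob P {(w,v,r,x). query w v r = qq} = 1 / real (K choose D)"
    using prot assms(7,8) unfolding JPLT_I_protocol_def Let_def P_def by blast+
  have "0 < real (K choose D)" using assms(4) by simp
  then have "measure_pmf.prob P {(w,v,r,x). w = Wt \<and> query w v r = qq} \<noteq> 0"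
    using priv by auto
  then have "set_pmf P \<inter> {(w,v,r,x). w = Wt \<and> query w v r = qq} \<noteq> {}"
    using measure_pmf_zero_iff by blast
  then obtain v r x0 where vr: "(Wt, v, r, x0) \<in> set_pmf P" and qv: "query Wt v r = qq"
    by auto
  have vM: "v \<in> M" and rR: "r \<in> set_pmf rho" using vr setP by auto
  define g where "g = (\<lambda>(w,v,r,x). (demand w v x, (answer (query w v r) x, query w v r, w, (v::'f mat))))"
  define Pm where "Pm = map_pmf g P"
  have recm: "cond_entropy Pm = 0" using rec unfolding Pm_def g_def .
  have finPm: "finite (fst ` set_pmf Pm)"
  proof (rule finite_subset)
    show "fst ` set_pmf Pm \<subseteq> (\<lambda>(w,v,x). demand w v x) ` (S \<times> M \<times> C)"
      unfolding Pm_def set_map_pmf setP g_def by (force simp: image_iff)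
    show "finite ((\<lambda>(w,v,x). demand w v x) ` (S \<times> M \<times> C))"
      using finS finM finC by simp
  qed
  have detx: "demand Wt v x = demand Wt v x'"
    if "x \<in> C" "x' \<in> C" "answer qq x = answer qq x'" for x x'
  proof -
    have "g (Wt, v, r, x) \<in> set_pmf Pm" "g (Wt, v, r, x') \<in> set_pmf Pm"
      unfolding Pm_def set_map_pmf using that vM rR setP assms(8) S_def by auto
    from cond_entropy_zero_det[OF finPm recm this] show ?thesis
      using that qv unfolding g_def by simp
  qed
  define Fa where "Fa a = demand Wt v (SOME x. x \<in> C \<and> answer qq x = a)" for a
  have Fa: "Fa (answer qq x) = demand Wt v x" if "x \<in> C" for x
  proof -
    have "(SOME x'. x' \<in> C \<and> answer qq x' = answer qq x) \<in> C \<and>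
          answer qq (SOME x'. x' \<in> C \<and> answer qq x' = answer qq x) = answer qq x"
      by (rule someI[where P="\<lambda>x'. x' \<in> C \<and> answer qq x' = answer qq x" and x=x]) (simp add: that)
    then show ?thesis unfolding Fa_def using detx that by metis
  qed
  have ne: "set_pmf P \<inter> {(w,v,r,x). query w v r = qq} \<noteq> {}"
    using assms(7) unfolding P_def by (metis measure_pmf_zero_iff less_irrefl)
  show ?thesis
  proof (rule bexI[of _ v])
    show "v \<in> MDS_mats L D" using vM M_def by simp
    show "cond_entropy (map_pmf (\<lambda>(w,v',r,x). (demand Wt v x, answer (query w v' r) x))
              (cond_pmf (jplt1_joint K N D L rho) {(w,v,r,x). query w v r = qq})) = 0"
    proof (rule cond_entropy_det[where F = Fa])
      fix zy
      assume "zy \<in> set_pmf (map_pmf (\<lambda>(w,v',r,x). (demand Wt v x, answer (query w v' r) x))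
              (cond_pmf (jplt1_joint K N D L rho) {(w,v,r,x). query w v r = qq}))"
      then obtain w v' r' x where el: "(w,v',r',x) \<in> set_pmf P" "query w v' r' = qq"
        and zy: "zy = (demand Wt v x, answer (query w v' r') x)"
        using ne unfolding P_def by (auto simp: set_cond_pmf)
      have "x \<in> C" using el setP by auto
      then show "fst zy = Fa (snd zy)" using zy el Fa by simp
    qed
  qed
qed

end
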